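(* Let $H$ be an $r$-uniform hypergraph and $k\geq 1$ an integer. For any vertex $v\in S_i$, the depth of $v$ is at least $i$.
   Context: The parallel $k$-stripping process applied to $H$ repeatedly removes, in each round, all vertices of degree less than $k$ simultaneously together with all hyperedges containing them, until none remain; $S_i$ is the set of vertices removed in round $i$. A $k$-stripping sequence is a sequence of vertices that can be deleted one at a time (each with its incident hyperedges) such that each has degree less than $k$ at the time of its deletion. For a vertex $v$ not in the $k$-core (the maximum subhypergraph of minimum degree at least $k$), its depth is the length of a shortest $k$-stripping sequence ending with $v$. *)

theory Defs
  imports Main
begin

definition hdeg :: "'a set set \<Rightarrow> 'a \<Rightarrow> nat" where
  "hdeg E v = card {e \<in> E. v \<in> e}"

definition r_uniform_hypergraph :: "nat \<Rightarrow> 'a set \<Rightarrow> 'a set set \<Rightarrow> bool" where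
  "r_uniform_hypergraph r V E \<longleftrightarrow> finite V \<and> (\<forall>e\<in>E. e \<subseteq> V \<and> card e = r)"

definition del_vertices :: "'a set \<Rightarrow> 'a set \<Rightarrow> 'a set set \<Rightarrow> 'a set \<times> 'a set set" where
  "del_vertices S V E = (V - S, {e \<in> E. e \<inter> S = {}})"

fun par_state :: "nat \<Rightarrow> 'a set \<Rightarrow> 'a set set \<Rightarrow> nat \<Rightarrow> 'a set \<times> 'a set set" where
  "par_state k V E 0 = (V, E)"
| "par_state k V E (Suc i) =
     (let (V', E') = par_state k V E i
      in del_vertices {v \<in> V'. hdeg E' v < k} V' E')"

text \<open>S_i: the set of vertices removed in round i (rounds numbered from 1; S_0 is empty).\<close>
fun strip_round :: "nat \<Rightarrow> 'a set \<Rightarrow> 'a set set \<Rightarrow> nat \<Rightarrow> 'a set" where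
  "strip_round k V E 0 = {}"
| "strip_round k V E (Suc i) =
     (let (V', E') = par_state k V E i in {v \<in> V'. hdeg E' v < k})"

fun strip_seq :: "nat \<Rightarrow> 'a set \<Rightarrow> 'a set set \<Rightarrow> 'a list \<Rightarrow> bool" where
  "strip_seq k V E [] = True"
| "strip_seq k V E (x # xs) =
     (x \<in> V \<and> hdeg E x < k \<and>
      (let (V', E') = del_vertices {x} V E in strip_seq k V' E' xs))"

definition depth :: "nat \<Rightarrow> 'a set \<Rightarrow> 'a set set \<Rightarrow> 'a \<Rightarrow> nat" where
  "depth k V E v = (LEAST n. \<exists>xs. strip_seq k V E xs \<and> xs \<noteq> [] \<and> last xs = v \<and> length xs = n)"

end

theory Submission
  imports Defs
begin

lemma ps_Suc: "par_state k V E (Suc j) =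
  (fst (par_state k V E j) - {v\<in>fst (par_state k V E j). hdeg (snd (par_state k V E j)) v < k},
   {e\<in>snd (par_state k V E j). e \<inter> {v\<in>fst (par_state k V E j). hdeg (snd (par_state k V E j)) v < k} = {}})"
  by (cases "par_state k V E j") (simp add: del_vertices_def)

declare par_state.simps(2)[simp del]

lemma sr_Suc: "strip_round k V E (Suc j) =
  {v\<in>fst (par_state k V E j). hdeg (snd (par_state k V E j)) v < k}"
  by (cases "par_state k V E j") simp

lemma PV_sub: "fst (par_state k V E j) \<subseteq> V"
  by (induction j) (auto simp: ps_Suc)

lemma PV_mono: "j \<le> j' \<Longrightarrow> fst (par_state k V E j') \<subseteq> fst (par_state k V E j)"
proof (induction j' )
  case 0 then show ?case by simp
next
  case (Suc j')
  show ?case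
  proof (cases "j = Suc j'")
    case True then show ?thesis by simp
  next
    case False
    then have "j \<le> j'" using Suc.prems by simp
    then show ?thesis using Suc.IH by (auto simp: ps_Suc)
  qed
qed

lemma PE_eq: assumes "\<forall>e\<in>E. e \<subseteq> V"
  shows "snd (par_state k V E j) = {e\<in>E. e \<subseteq> fst (par_state k V E j)}"
proof (induction j)
  case 0 then show ?case using assms by auto
next
  case (Suc j)
  show ?case unfolding ps_Suc using Suc by auto
qed

lemma hdeg_mono: "finite E' \<Longrightarrow> E \<subseteq> E' \<Longrightarrow> hdeg E v \<le> hdeg E' v"
  unfolding hdeg_def by (rule card_mono) auto

lemma del_D: "del_vertices {x} (V - P) {e\<in>E. e \<inter> P = {}} =
   (V - insert x P, {e\<in>E. e \<inter> insert x P = {}})"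
  by (auto simp: del_vertices_def)

lemma strip_append:
  "strip_seq k (V - P) {e\<in>E. e \<inter> P = {}} (xs @ ys) \<longleftrightarrow>
   strip_seq k (V - P) {e\<in>E. e \<inter> P = {}} xs \<and>
   strip_seq k (V - (P \<union> set xs)) {e\<in>E. e \<inter> (P \<union> set xs) = {}} ys"
proof (induction xs arbitrary: P)
  case Nil then show ?case by simp
next
  case (Cons x xs)
  have "insert x P \<union> set xs = P \<union> set (x # xs)" by auto
  then show ?case using Cons[of "insert x P"] by (simp add: del_D)
qed

lemma partB:
  assumes Vs: "\<forall>e\<in>E. e \<subseteq> V" and fin: "finite E"
  shows "strip_seq k (V - P) {e\<in>E. e \<inter> P = {}} xs \<Longrightarrow> P \<inter> fst (par_state k V E j) = {}
    \<Longrightarrow> \<forall>m<length xs. xs!m \<notin> fst (par_state k V E (j + m + 1))"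
proof (induction xs arbitrary: P j)
  case Nil then show ?case by simp
next
  case (Cons x xs)
  let ?V = "\<lambda>j. fst (par_state k V E j)"
  let ?E = "\<lambda>j. snd (par_state k V E j)"
  have c: "x \<in> V - P \<and> hdeg {e\<in>E. e \<inter> P = {}} x < k \<and>
     strip_seq k (V - insert x P) {e\<in>E. e \<inter> insert x P = {}} xs"
    using Cons.prems(1) by (simp only: strip_seq.simps(2) del_D Let_def prod.case)
  then have dg: "hdeg {e\<in>E. e \<inter> P = {}} x < k"
    and rest: "strip_seq k (V - insert x P) {e\<in>E. e \<inter> insert x P = {}} xs" by auto
  have s1: "?E j \<subseteq> {e\<in>E. e \<inter> P = {}}" unfolding PE_eq[OF Vs] using Cons.prems(2) by blast
  have f1: "finite {e\<in>E. e \<inter> P = {}}" using fin by simp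
  have "hdeg (?E j) x \<le> hdeg {e\<in>E. e \<inter> P = {}} x" by (rule hdeg_mono[OF f1 s1])
  then have "hdeg (?E j) x < k" using dg by linarith
  then have x1: "x \<notin> ?V (Suc j)" by (auto simp: ps_Suc)
  have "?V (Suc j) \<subseteq> ?V j" by (rule PV_mono) simp
  then have "insert x P \<inter> ?V (Suc j) = {}" using x1 Cons.prems(2) by auto
  from Cons.IH[OF rest this] have IH: "\<forall>m<length xs. xs ! m \<notin> ?V (Suc j + m + 1)" .
  show ?case
  proof (intro allI impI)
    fix m assume "m < length (x # xs)"
    then show "(x # xs) ! m \<notin> ?V (j + m + 1)"
    proof (cases m)
      case 0 then show ?thesis using x1 by simp
    next
      case (Suc m')
      then have "m' < length xs" using \<open>m < length (x # xs)\<close> by simp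
      then have "xs ! m' \<notin> ?V (Suc j + m' + 1)" using IH by blast
      moreover have "Suc j + m' + 1 = j + m + 1" using Suc by simp
      ultimately show ?thesis using Suc by simp
    qed
  qed
qed

lemma finE_of: assumes "\<forall>e\<in>E. e \<subseteq> V" "finite V" shows "finite E"
proof -
  have "E \<subseteq> Pow V" using assms(1) by blast
  then show ?thesis by (rule finite_subset) (simp add: assms(2))
qed

lemma genL:
  assumes Vs: "\<forall>e\<in>E. e \<subseteq> V" and fE: "finite E"
  shows "\<forall>z\<in>set zs. z \<in> W \<and> hdeg {e\<in>E. e \<subseteq> W} z < k \<Longrightarrow> distinct zs \<Longrightarrow> W \<subseteq> V
    \<Longrightarrow> set zs \<inter> Q = {}
    \<Longrightarrow> strip_seq k (V - ((V - W) \<union> Q)) {e\<in>E. e \<inter> ((V - W) \<union> Q) = {}} zs"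
proof (induction zs arbitrary: Q)
  case Nil then show ?case by simp
next
  case (Cons z zs')
  have zV: "z \<in> W" "hdeg {e\<in>E. e \<subseteq> W} z < k" using Cons.prems(1) by auto
  have sub: "{e\<in>E. e \<inter> ((V - W) \<union> Q) = {}} \<subseteq> {e\<in>E. e \<subseteq> W}" using Vs by blast
  have f1: "finite {e\<in>E. e \<subseteq> W}" using fE by simp
  have "hdeg {e\<in>E. e \<inter> ((V - W) \<union> Q) = {}} z \<le> hdeg {e\<in>E. e \<subseteq> W} z"
    by (rule hdeg_mono[OF f1 sub])
  then have dg: "hdeg {e\<in>E. e \<inter> ((V - W) \<union> Q) = {}} z < k" using zV(2) by linarith
  have d: "del_vertices {z} (V - ((V - W) \<union> Q)) {e\<in>E. e \<inter> ((V - W) \<union> Q) = {}}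
    = (V - ((V - W) \<union> insert z Q), {e\<in>E. e \<inter> ((V - W) \<union> insert z Q) = {}})"
    unfolding del_vertices_def by blast
  have p1: "\<forall>z\<in>set zs'. z \<in> W \<and> hdeg {e\<in>E. e \<subseteq> W} z < k" using Cons.prems(1) by simp
  have p2: "distinct zs'" using Cons.prems(2) by simp
  have p4: "set zs' \<inter> insert z Q = {}" using Cons.prems(2,4) by auto
  have r: "strip_seq k (V - ((V - W) \<union> insert z Q)) {e\<in>E. e \<inter> ((V - W) \<union> insert z Q) = {}} zs'"
    using Cons.IH[OF p1 p2 Cons.prems(3) p4] .
  have zin: "z \<in> V - ((V - W) \<union> Q)" using zV Cons.prems(3,4) by auto
  show ?case unfolding strip_seq.simps(2) d Let_def prod.case using zin dg r by blast
qed

lemma partA: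
  assumes Vs: "\<forall>e\<in>E. e \<subseteq> V" and finV: "finite V"
  shows "\<exists>xs. strip_seq k V E xs \<and> set xs = V - fst (par_state k V E j)"
proof (induction j)
  case 0 have "strip_seq k V E []" by simp
  then show ?case by (intro exI[of _ "[]"]) simp
next
  case (Suc j)
  define W where "W = fst (par_state k V E j)"
  have fE: "finite E" using finE_of[OF Vs finV] .
  have WV: "W \<subseteq> V" unfolding W_def by (rule PV_sub)
  have EW: "snd (par_state k V E j) = {e\<in>E. e \<subseteq> W}" unfolding W_def by (rule PE_eq[OF Vs])
  let ?S = "{v\<in>W. hdeg {e\<in>E. e \<subseteq> W} v < k}"
  from Suc obtain xs where xs: "strip_seq k V E xs" "set xs = V - W" unfolding W_def by blast
  have "?S \<subseteq> W" by blast
  then have "finite ?S" by (rule finite_subset) (rule finite_subset[OF WV finV])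
  then obtain zs where zs: "set zs = ?S" "distinct zs" using finite_distinct_list by blast
  have "strip_seq k (V - ((V - W) \<union> {})) {e\<in>E. e \<inter> ((V - W) \<union> {}) = {}} zs"
    by (rule genL[OF Vs fE]) (use zs WV in auto)
  then have g: "strip_seq k (V - ({} \<union> set xs)) {e\<in>E. e \<inter> ({} \<union> set xs) = {}} zs"
    using xs(2) by simp
  have x0: "strip_seq k (V - {}) {e\<in>E. e \<inter> {} = {}} xs" using xs(1) by simp
  have "strip_seq k (V - {}) {e\<in>E. e \<inter> {} = {}} (xs @ zs)"
    unfolding strip_append[of k V "{}" E xs zs] using x0 g by (rule conjI)
  then have "strip_seq k V E (xs @ zs)" by simp
  moreover have "fst (par_state k V E (Suc j)) = W - ?S" unfolding ps_Suc W_def[symmetric] EW by (rule fst_conv)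
  moreover have "set (xs @ zs) = V - (W - ?S)" using xs(2) zs(1) WV by auto
  ultimately show ?case by (intro exI[of _ "xs @ zs"]) simp
qed

theorem lemma22:
  fixes V :: "'a set" and E :: "'a set set" and r k i :: nat and v :: 'a
  assumes "r_uniform_hypergraph r V E"
    and "k \<ge> 1"
    and "v \<in> strip_round k V E i"
  shows "depth k V E v \<ge> i"
proof -
  have Vs: "\<forall>e\<in>E. e \<subseteq> V" and finV: "finite V" using assms(1)
    by (auto simp: r_uniform_hypergraph_def)
  have fE: "finite E" using finE_of[OF Vs finV] .
  obtain i' where ii: "i = Suc i'" using assms(3) by (cases i) auto
  let ?V = "\<lambda>j. fst (par_state k V E j)"
  let ?E = "\<lambda>j. snd (par_state k V E j)"
  have vS: "v \<in> ?V i'" "hdeg (?E i') v < k" using assms(3) ii sr_Suc by auto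
  have lenB: "length xs \<ge> i" if "strip_seq k V E xs" "xs \<noteq> []" "last xs = v" for xs
  proof (rule ccontr)
    assume "\<not> i \<le> length xs"
    then have le: "length xs \<le> i'" using ii by simp
    have "strip_seq k (V - {}) {e\<in>E. e \<inter> {} = {}} xs" using that by simp
    from partB[OF Vs fE this, of 0] have
      "\<forall>m<length xs. xs!m \<notin> ?V (m + 1)" by simp
    moreover have "length xs - 1 < length xs" using that(2) by simp
    ultimately have "xs ! (length xs - 1) \<notin> ?V (length xs - 1 + 1)" by blast
    moreover have "length xs - 1 + 1 = length xs" using that(2) by simp
    ultimately have "v \<notin> ?V (length xs)" using that last_conv_nth[of xs] by simp
    moreover have "?V i' \<subseteq> ?V (length xs)" by (rule PV_mono[OF le])
    ultimately show False using vS by blast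
  qed
  obtain xs where xs: "strip_seq k V E xs" "set xs = V - ?V i'" using partA[OF Vs finV] by blast
  have "strip_seq k V E (xs @ [v])"
  proof -
    have "strip_seq k (V - {}) {e\<in>E. e \<inter> {} = {}} (xs @ [v])"
    proof (subst strip_append, intro conjI)
      show "strip_seq k (V - {}) {e\<in>E. e \<inter> {} = {}} xs" using xs by simp
      have Ej: "{e\<in>E. e \<inter> ({} \<union> set xs) = {}} = ?E i'" unfolding PE_eq[OF Vs] using Vs xs(2) by blast
      show "strip_seq k (V - ({} \<union> set xs)) {e\<in>E. e \<inter> ({} \<union> set xs) = {}} [v]"
        unfolding Ej using vS xs(2) PV_sub[of k V E i'] by auto
    qed
    then show ?thesis by simp
  qed
  then have ex: "\<exists>ys. strip_seq k V E ys \<and> ys \<noteq> [] \<and> last ys = v \<and> length ys = length (xs @ [v])"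
    by (intro exI[of _ "xs @ [v]"]) simp
  have ex2: "\<exists>n. \<exists>xs. strip_seq k V E xs \<and> xs \<noteq> [] \<and> last xs = v \<and> length xs = n"
    using ex by blast
  from LeastI_ex[OF ex2] obtain ys where
    ys: "strip_seq k V E ys" "ys \<noteq> []" "last ys = v"
    "length ys = (LEAST n. \<exists>xs. strip_seq k V E xs \<and> xs \<noteq> [] \<and> last xs = v \<and> length xs = n)"
    by blast
  show ?thesis unfolding depth_def using lenB[OF ys(1-3)] ys(4) by simp
qed

end
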